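(* Let $p$ be a prime, $e\geq 2$, $N=\langle\sigma\rangle$ cyclic of order $p^e$, and let $a$ be an integer with $a\equiv 1\pmod p$, and $u$ any integer. (a) If $p$ is odd, then the order of $[\sigma^u,\varphi_a]$ in $\mathrm{Hol}(N)$ is $\max\{p^{e-v_p(u)},|\varphi_a|\}$. (b) If $p=2$, then the order of $[\sigma^u,\varphi_a]$ is $\max\{2^{e-v_2(u)},|\varphi_a|\}$ if $a\equiv 1\pmod 4$, and $\max\{2^{e-v_2(u)-v_2(\frac{a+1}{2})},|\varphi_a|\}$ if $a\equiv 3\pmod 4$.
   Context: For an integer $a$ coprime to $p$, $\varphi_a\in\mathrm{Aut}(N)$ is $\sigma\mapsto\sigma^a$. Elements of $\mathrm{Hol}(N)=N\rtimes\mathrm{Aut}(N)$ are written $[\sigma^u,\varphi_a]$ with $[\sigma^u,\varphi_a][\sigma^v,\varphi_b]=[\sigma^{u+va},\varphi_{ab}]$. $v_p(m)$ is the $p$-adic valuation of $m$, with $v_p(0)=\infty$ (so that $p^{e-v_p(u)}$ is interpreted as $1$ when $\sigma^u=1$, i.e. exponents below $0$ give order $1$). *)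

theory Defs
  imports "HOL-Algebra.Algebra" "HOL-Library.Extended_Nat"
    "HOL-Computational_Algebra.Factorial_Ring" "HOL-Number_Theory.Cong"
begin

text \<open>The cyclic group N of order n, modelled as the integers 0..n-1 under addition mod n,
  written multiplicatively (generator sigma = 1, so sigma to the power u is u mod n).\<close>
definition CycN :: "nat \<Rightarrow> int monoid" where
  "CycN n = \<lparr>carrier = {0..<int n}, monoid.mult = (\<lambda>x y. (x + y) mod int n), one = 0\<rparr>"

definition phiA :: "nat \<Rightarrow> int \<Rightarrow> (int \<Rightarrow> int)" where
  "phiA n a = restrict (\<lambda>x. (a * x) mod int n) (carrier (CycN n))"

definition Hol :: "('a, 'b) monoid_scheme \<Rightarrow> ('a \<times> ('a \<Rightarrow> 'a)) monoid" where
  "Hol N = \<lparr>carrier = carrier N \<times> auto N,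
            monoid.mult = (\<lambda>(x, f) (y, g). (x \<otimes>\<^bsub>N\<^esub> f y, compose (carrier N) f g)),
            one = (\<one>\<^bsub>N\<^esub>, restrict id (carrier N))\<rparr>"

definition vp :: "nat \<Rightarrow> int \<Rightarrow> enat" where
  "vp p m = (if m = 0 then \<infinity> else enat (multiplicity (int p) m))"

end

theory Submission
  imports Defs
begin

definition geomS :: "int \<Rightarrow> nat \<Rightarrow> int" where
  "geomS b n = (\<Sum>i<n. b ^ i)"

lemma geomS_0[simp]: "geomS b 0 = 0" by (simp add: geomS_def)
lemma geomS_Suc: "geomS b (Suc n) = geomS b n + b ^ n" by (simp add: geomS_def)

lemma geomS_add: "geomS b (k + l) = geomS b k + b ^ k * geomS b l"
  by (induction l) (simp_all add: geomS_Suc algebra_simps power_add)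

lemma geomS_mult: "geomS b (q * m) = geomS b q * geomS (b ^ q) m"
proof (induction m)
  case 0 then show ?case by simp
next
  case (Suc m)
  have "geomS b (q * Suc m) = geomS b (q * m + q)" by (simp add: add.commute)
  also have "\<dots> = geomS b (q*m) + b ^ (q*m) * geomS b q" by (rule geomS_add)
  also have "\<dots> = geomS b q * geomS (b ^ q) (Suc m)"
    using Suc by (simp add: geomS_Suc algebra_simps flip: power_mult)
  finally show ?case .
qed

lemma geomS_times: "(b - 1) * geomS b n = b ^ n - 1"
  by (induction n) (simp_all add: geomS_Suc algebra_simps)

lemma geomS_cong: "[b = 1] (mod q) \<Longrightarrow> [geomS b n = int n] (mod q)"
proof (induction n)
  case 0 then show ?case by simp
next
  case (Suc n)
  have "[b ^ n = 1 ^ n] (mod q)" using Suc.prems by (rule cong_pow)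
  then have "[geomS b n + b ^ n = int n + 1] (mod q)"
    using Suc by (intro cong_add) auto
  then show ?case by (simp add: geomS_Suc add.commute)
qed

lemma pow_lin: "[b ^ i = 1 + int i * (b - 1)] (mod (b - 1)^2)"
proof (induction i)
  case 0 then show ?case by simp
next
  case (Suc i)
  have "[b * b ^ i = b * (1 + int i * (b - 1))] (mod (b - 1)^2)"
    using Suc by (intro cong_mult) auto
  moreover have "b * (1 + int i * (b - 1)) = (1 + int (Suc i) * (b - 1)) + int i * (b - 1)^2"
    by (simp add: algebra_simps power2_eq_square)
  moreover have "[(1 + int (Suc i) * (b - 1)) + int i * (b - 1)^2 = 1 + int (Suc i) * (b - 1)] (mod (b - 1)^2)"
    by (simp add: cong_iff_dvd_diff)
  ultimately show ?case by (metis cong_trans power_Suc)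
qed

lemma gauss2: "2 * (\<Sum>i<n. int i) = int n * (int n - 1)"
  by (induction n) (simp_all add: algebra_simps)

lemma Sp_odd:
  assumes "odd p" "[b = 1] (mod int p)"
  shows "[geomS b p = int p] (mod (int p)^2)"
proof -
  have d: "int p dvd b - 1" using assms(2) by (simp add: cong_iff_dvd_diff)
  then have d2: "(int p)^2 dvd (b - 1)^2" by (simp add: dvd_power_same)
  have "[geomS b p = (\<Sum>i<p. 1 + int i * (b - 1))] (mod (b - 1)^2)"
    unfolding geomS_def by (rule cong_sum) (rule pow_lin)
  then have c1: "[geomS b p = (\<Sum>i<p. 1 + int i * (b - 1))] (mod (int p)^2)"
    using d2 cong_dvd_modulus by blast
  obtain h where h: "int p = 2 * h + 1" using assms(1)
    by (metis odd_two_times_div_two_succ of_nat_1 of_nat_add of_nat_mult of_nat_numeral)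
  have "2 * (\<Sum>i<p. int i) = 2 * (int p * h)" using gauss2[of p] h by simp
  then have g: "(\<Sum>i<p. int i) = int p * h" by simp
  have "(\<Sum>i<p. 1 + int i * (b - 1)) = (\<Sum>i<p. 1) + (\<Sum>i<p. int i * (b - 1))"
    by (rule sum.distrib)
  also have "\<dots> = int p + (\<Sum>i<p. int i) * (b - 1)" by (simp add: sum_distrib_right)
  also have "\<dots> = int p + (b - 1) * (\<Sum>i<p. int i)" by simp
  finally have "(\<Sum>i<p. 1 + int i * (b - 1)) = int p + (b - 1) * (\<Sum>i<p. int i)" .
  also have "\<dots> = int p + (b - 1) * int p * h" using g by simp
  finally have e: "(\<Sum>i<p. 1 + int i * (b - 1)) = int p + (b - 1) * int p * h" .
  obtain t where t: "b - 1 = int p * t" using d by blast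
  have c2: "[int p + (b - 1) * int p * h = int p] (mod (int p)^2)"
    by (simp add: cong_iff_dvd_diff t power2_eq_square)
  show ?thesis using cong_trans[OF c1[unfolded e] c2] .
qed

definition Hyp :: "nat \<Rightarrow> int \<Rightarrow> bool" where
  "Hyp p b \<longleftrightarrow> (odd p \<and> [b = 1] (mod int p)) \<or> (p = 2 \<and> [b = 1] (mod 4))"

lemma Hyp_base: "Hyp p b \<Longrightarrow> [b = 1] (mod int p)"
  unfolding Hyp_def by (auto intro: cong_dvd_modulus[where m=4])

lemma Hyp_pow: "Hyp p b \<Longrightarrow> Hyp p (b ^ k)"
  unfolding Hyp_def using cong_pow[of b 1 _ k] by auto

lemma Hyp_decomp:
  assumes "Factorial_Ring.prime p" "Hyp p b"
  shows "\<exists>c. geomS b p = int p * c \<and> \<not> int p dvd c"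
proof (cases "odd p")
  case True
  then have "[b = 1] (mod int p)" using assms Hyp_def by auto
  from Sp_odd[OF True this] have "(int p)^2 dvd geomS b p - int p"
    by (simp add: cong_iff_dvd_diff)
  then obtain t where t: "geomS b p - int p = (int p)^2 * t" by blast
  have "geomS b p = int p * (1 + int p * t)" using t by (simp add: algebra_simps power2_eq_square)
  moreover have "\<not> int p dvd 1 + int p * t"
  proof
    assume "int p dvd 1 + int p * t"
    then have "int p dvd 1" by (simp add: dvd_add_left_iff)
    then show False using assms(1) by (simp add: prime_gt_1_nat)
  qed
  ultimately show ?thesis by blast
next
  case False
  then have p2: "p = 2" "[b = 1] (mod 4)" using assms Hyp_def by auto
  then have "4 dvd b - 1" by (simp add: cong_iff_dvd_diff)
  then obtain t where t: "b - 1 = 4 * t" by blast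
  have "geomS b 2 = 2 * (1 + 2 * t)" using t by (simp add: geomS_def numeral_2_eq_2 algebra_simps)
  moreover have "\<not> (2::int) dvd 1 + 2 * t" by simp
  ultimately have "geomS b p = int p * (1 + 2 * t) \<and> \<not> int p dvd (1 + 2 * t)" using p2 by simp
  then show ?thesis by blast
qed

lemma geomS_dvd_iff:
  assumes "Factorial_Ring.prime p" "Hyp p b"
  shows "(int p)^j dvd geomS b n \<longleftrightarrow> (int p)^j dvd int n"
  using assms(2)
proof (induction n arbitrary: b j rule: less_induct)
  case (less n)
  have p1: "p > 1" using assms(1) prime_gt_1_nat by blast
  show ?case
  proof (cases "int p dvd int n")
    case False
    have "[geomS b n = int n] (mod int p)" using geomS_cong Hyp_base[OF less.prems] by blast
    then have F: "\<not> int p dvd geomS b n" using False cong_dvd_iff by blast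
    show ?thesis
    proof (cases j)
      case 0 then show ?thesis by simp
    next
      case (Suc j')
      have "\<And>Y. (int p)^j dvd Y \<Longrightarrow> int p dvd Y" using Suc
        by (metis dvd_mult_left power_Suc)
      then show ?thesis using F False by blast
    qed
  next
    case True
    then obtain m where m: "n = p * m" by (metis dvd_def of_nat_dvd_iff)
    show ?thesis
    proof (cases "m = 0")
      case True then show ?thesis using m by simp
    next
      case False
      then have mn: "m < n" using m p1 by simp
      obtain c where c: "geomS b p = int p * c" "\<not> int p dvd c"
        using Hyp_decomp[OF assms(1) less.prems] by blast
      have S: "geomS b n = int p * (c * geomS (b ^ p) m)" using m c geomS_mult by simp
      show ?thesis
      proof (cases j)
        case 0 then show ?thesis by simp
      next
        case (Suc j')
        have cop: "coprime ((int p)^j') c"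
          using c(2) assms(1) by (simp add: prime_imp_coprime)
        have "(int p)^j dvd geomS b n \<longleftrightarrow> (int p)^j' dvd c * geomS (b ^ p) m"
          using S Suc p1 by simp
        also have "\<dots> \<longleftrightarrow> (int p)^j' dvd geomS (b ^ p) m"
          using cop by (simp add: coprime_dvd_mult_right_iff)
        also have "\<dots> \<longleftrightarrow> (int p)^j' dvd int m"
          using less.IH[OF mn Hyp_pow[OF less.prems]] by blast
        also have "\<dots> \<longleftrightarrow> (int p)^j dvd int n" using Suc m p1 by simp
        finally show ?thesis .
      qed
    qed
  qed
qed

lemma Vlem:
  assumes "Factorial_Ring.prime p" "u \<noteq> 0"
  shows "(int p)^e dvd u * Y \<longleftrightarrow> (int p)^(e - Factorial_Ring.multiplicity (int p) u) dvd Y"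
proof -
  define v where "v = Factorial_Ring.multiplicity (int p) u"
  have nu: "\<not> is_unit (int p)" using assms(1) not_prime_unit prime_nat_int_transfer by blast
  obtain c where c: "u = (int p) ^ v * c" "\<not> int p dvd c"
    using multiplicity_decompose'[OF assms(2) nu] unfolding v_def by metis
  have uY: "u * Y = (int p) ^ v * (c * Y)" using c(1) by (simp add: mult.assoc)
  have p0: "(int p)^v \<noteq> 0" using assms prime_gt_0_nat by simp
  have cop: "coprime ((int p)^k) c" for k
  proof -
    have "Factorial_Ring.prime (int p)" using assms(1) by (rule prime_nat_int_transfer[THEN iffD2])
    then have "coprime (int p) c" using c(2) by (rule prime_imp_coprime)
    then show ?thesis by simp
  qed
  show ?thesis
  proof (cases "v \<le> e")
    case True
    have pe: "(int p)^e = (int p)^v * (int p)^(e - v)" using True by (simp flip: power_add)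
    have "(int p)^e dvd u * Y \<longleftrightarrow> (int p)^(e-v) dvd c * Y"
      unfolding uY pe using dvd_times_left_cancel_iff[OF p0] by blast
    also have "\<dots> \<longleftrightarrow> (int p)^(e-v) dvd Y" using cop coprime_dvd_mult_right_iff by blast
    finally show ?thesis unfolding v_def .
  next
    case False
    have "(int p)^e dvd (int p)^v" using False by (simp add: le_imp_power_dvd)
    then have "(int p)^e dvd u * Y" unfolding uY by (rule dvd_mult2)
    moreover have "e - Factorial_Ring.multiplicity (int p) u = 0" using False unfolding v_def by simp
    ultimately show ?thesis by simp
  qed
qed



lemma Hol_group:
  assumes N: "group N"
  shows "group (Hol N)"
proof -
  interpret N: group N by (rule N)
  interpret A: group "AutoGroup N" by (rule N.AutoGroup)
  have Ac: "carrier (AutoGroup N) = auto N" by (simp add: AutoGroup_def BijGroup_def)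
  have Am: "f \<otimes>\<^bsub>AutoGroup N\<^esub> g = compose (carrier N) f g" if "f \<in> auto N" "g \<in> auto N" for f g
    using that by (simp add: AutoGroup_def BijGroup_def auto_def)
  have A1: "\<one>\<^bsub>AutoGroup N\<^esub> = restrict id (carrier N)"
    by (simp add: AutoGroup_def BijGroup_def id_def)
  have hom: "f \<in> hom N N" if "f \<in> auto N" for f using that by (simp add: auto_def)
  have fc: "f y \<in> carrier N" if "f \<in> auto N" "y \<in> carrier N" for f y
    using hom[OF that(1)] that(2) by (auto simp: hom_def)
  have fm: "f (x \<otimes>\<^bsub>N\<^esub> y) = f x \<otimes>\<^bsub>N\<^esub> f y" if "f \<in> auto N" "x \<in> carrier N" "y \<in> carrier N" for f x y
    using hom[OF that(1)] that(2,3) by (auto simp: hom_def)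
  have cc: "compose (carrier N) f g \<in> auto N" if "f \<in> auto N" "g \<in> auto N" for f g
    using A.m_closed[of f g] that by (simp add: Ac Am)
  have Hc: "carrier (Hol N) = carrier N \<times> auto N" by (simp add: Hol_def)
  have Hm: "(x, f) \<otimes>\<^bsub>Hol N\<^esub> (y, g) = (x \<otimes>\<^bsub>N\<^esub> f y, compose (carrier N) f g)" for x f y g
    by (simp add: Hol_def)
  have H1: "\<one>\<^bsub>Hol N\<^esub> = (\<one>\<^bsub>N\<^esub>, restrict id (carrier N))" by (simp add: Hol_def)
  show ?thesis
  proof (rule groupI)
    fix a b assume a: "a \<in> carrier (Hol N)" and b: "b \<in> carrier (Hol N)"
    obtain x f where xf: "a = (x, f)" "x \<in> carrier N" "f \<in> auto N" using a Hc by auto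
    obtain y g where yg: "b = (y, g)" "y \<in> carrier N" "g \<in> auto N" using b Hc by auto
    show "a \<otimes>\<^bsub>Hol N\<^esub> b \<in> carrier (Hol N)"
      using xf yg by (simp add: Hm Hc fc cc)
  next
    show "\<one>\<^bsub>Hol N\<^esub> \<in> carrier (Hol N)"
      using A.one_closed by (simp add: H1 Hc Ac A1)
  next
    fix a b c assume a: "a \<in> carrier (Hol N)" and b: "b \<in> carrier (Hol N)" and c: "c \<in> carrier (Hol N)"
    obtain x f where xf: "a = (x, f)" "x \<in> carrier N" "f \<in> auto N" using a Hc by auto
    obtain y g where yg: "b = (y, g)" "y \<in> carrier N" "g \<in> auto N" using b Hc by auto
    obtain z h where zh: "c = (z, h)" "z \<in> carrier N" "h \<in> auto N" using c Hc by auto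
    have e1: "x \<otimes>\<^bsub>N\<^esub> f y \<otimes>\<^bsub>N\<^esub> compose (carrier N) f g z = x \<otimes>\<^bsub>N\<^esub> f (y \<otimes>\<^bsub>N\<^esub> g z)"
      using xf yg zh by (simp add: compose_eq fm fc N.m_assoc)
    have e2: "compose (carrier N) (compose (carrier N) f g) h = compose (carrier N) f (compose (carrier N) g h)"
      using A.m_assoc[of f g h] xf yg zh by (simp add: Ac Am cc)
    show "a \<otimes>\<^bsub>Hol N\<^esub> b \<otimes>\<^bsub>Hol N\<^esub> c = a \<otimes>\<^bsub>Hol N\<^esub> (b \<otimes>\<^bsub>Hol N\<^esub> c)"
      using xf yg zh e1 e2 by (simp add: Hm)
  next
    fix a assume a: "a \<in> carrier (Hol N)"
    obtain x f where xf: "a = (x, f)" "x \<in> carrier N" "f \<in> auto N" using a Hc by auto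
    have "compose (carrier N) (restrict id (carrier N)) f = f"
      using A.l_one[of f] xf A.one_closed by (simp add: Ac A1 Am)
    then show "\<one>\<^bsub>Hol N\<^esub> \<otimes>\<^bsub>Hol N\<^esub> a = a"
      using xf by (simp add: H1 Hm)
  next
    fix a assume a: "a \<in> carrier (Hol N)"
    obtain x f where xf: "a = (x, f)" "x \<in> carrier N" "f \<in> auto N" using a Hc by auto
    define h where "h = inv\<^bsub>AutoGroup N\<^esub> f"
    have h: "h \<in> auto N" using A.inv_closed[of f] xf by (simp add: h_def Ac)
    have "f \<in> carrier (AutoGroup N)" using xf Ac by simp
    then have "h \<otimes>\<^bsub>AutoGroup N\<^esub> f = \<one>\<^bsub>AutoGroup N\<^esub>" unfolding h_def by (rule A.l_inv)
    then have hf: "compose (carrier N) h f = restrict id (carrier N)"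
      using Am[OF h xf(3)] A1 by simp
    have gh: "group_hom N N h" using h hom N by (simp add: group_hom_def group_hom_axioms_def)
    have "h (inv\<^bsub>N\<^esub> x) \<otimes>\<^bsub>N\<^esub> h x = \<one>\<^bsub>N\<^esub>"
      using xf h fm[of h "inv\<^bsub>N\<^esub> x" x] group_hom.hom_one[OF gh] by simp
    then have "(h (inv\<^bsub>N\<^esub> x), h) \<otimes>\<^bsub>Hol N\<^esub> a = \<one>\<^bsub>Hol N\<^esub>"
      using xf hf by (simp add: Hm H1)
    moreover have "(h (inv\<^bsub>N\<^esub> x), h) \<in> carrier (Hol N)" using xf h fc by (simp add: Hc)
    ultimately show "\<exists>b\<in>carrier (Hol N). b \<otimes>\<^bsub>Hol N\<^esub> a = \<one>\<^bsub>Hol N\<^esub>" by blast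
  qed
qed


lemma CycN_carrier: "carrier (CycN M) = {0..<int M}" by (simp add: CycN_def)
lemma CycN_mult: "x \<otimes>\<^bsub>CycN M\<^esub> y = (x + y) mod int M" by (simp add: CycN_def)
lemma CycN_one: "\<one>\<^bsub>CycN M\<^esub> = 0" by (simp add: CycN_def)

lemma CycN_group: assumes "M > 0" shows "group (CycN M)"
proof (rule groupI)
  fix x y z assume x: "x \<in> carrier (CycN M)" and y: "y \<in> carrier (CycN M)" and z: "z \<in> carrier (CycN M)"
  show "x \<otimes>\<^bsub>CycN M\<^esub> y \<in> carrier (CycN M)" using assms by (simp add: CycN_def)
  show "x \<otimes>\<^bsub>CycN M\<^esub> y \<otimes>\<^bsub>CycN M\<^esub> z = x \<otimes>\<^bsub>CycN M\<^esub> (y \<otimes>\<^bsub>CycN M\<^esub> z)"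
    by (simp add: CycN_def mod_add_left_eq mod_add_right_eq add.assoc)
next
  show "\<one>\<^bsub>CycN M\<^esub> \<in> carrier (CycN M)" using assms by (simp add: CycN_def)
next
  fix x assume x: "x \<in> carrier (CycN M)"
  then show "\<one>\<^bsub>CycN M\<^esub> \<otimes>\<^bsub>CycN M\<^esub> x = x" by (simp add: CycN_def)
  have "(- x) mod int M \<in> carrier (CycN M)" using assms by (simp add: CycN_def)
  moreover have "(- x) mod int M \<otimes>\<^bsub>CycN M\<^esub> x = \<one>\<^bsub>CycN M\<^esub>"
    by (simp add: CycN_def mod_add_left_eq)
  ultimately show "\<exists>y\<in>carrier (CycN M). y \<otimes>\<^bsub>CycN M\<^esub> x = \<one>\<^bsub>CycN M\<^esub>" by blast
qed

lemma CycN_pow_nat: "(1::int) [^]\<^bsub>CycN M\<^esub> (n::nat) = int n mod int M"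
proof (induction n)
  case 0 then show ?case by (simp add: CycN_def)
next
  case (Suc n)
  have "(1::int) [^]\<^bsub>CycN M\<^esub> Suc n = (int n mod int M + 1) mod int M"
    by (simp only: nat_pow_Suc CycN_mult Suc.IH)
  also have "\<dots> = (int n + 1) mod int M" by (rule mod_add_left_eq)
  also have "\<dots> = int (Suc n) mod int M" by (simp add: add.commute)
  finally show ?case .
qed

lemma CycN_pow_int: assumes "M > 0" shows "(1::int) [^]\<^bsub>CycN M\<^esub> (u::int) = u mod int M"
proof (cases "u < 0")
  case False
  then show ?thesis by (simp add: int_pow_def2 CycN_pow_nat)
next
  case True
  interpret G: group "CycN M" by (rule CycN_group[OF assms])
  have "inv\<^bsub>CycN M\<^esub> ((- u) mod int M) = u mod int M"
  proof (rule G.inv_equality)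
    show "u mod int M \<otimes>\<^bsub>CycN M\<^esub> (- u mod int M) = \<one>\<^bsub>CycN M\<^esub>"
      by (simp add: CycN_def mod_add_eq)
    show "- u mod int M \<in> carrier (CycN M)" using assms by (simp add: CycN_def)
    show "u mod int M \<in> carrier (CycN M)" using assms by (simp add: CycN_def)
  qed
  then show ?thesis using True by (simp add: int_pow_def2 CycN_pow_nat)
qed

lemma phiA_app: "x \<in> {0..<int M} \<Longrightarrow> phiA M b x = b * x mod int M"
  by (simp add: phiA_def CycN_def)

lemma phiA_compose: "compose {0..<int M} (phiA M b) (phiA M c) = phiA M (b * c)"
proof
  fix x show "compose {0..<int M} (phiA M b) (phiA M c) x = phiA M (b * c) x"
  proof (cases "x \<in> {0..<int M}")
    case True
    have "c * x mod int M \<in> {0..<int M}" using True by auto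
    then show ?thesis using True
      by (simp add: compose_eq phiA_app mod_mult_right_eq mult.assoc)
  next
    case False then show ?thesis by (auto simp: compose_def phiA_def CycN_def)
  qed
qed

lemma phiA_eq_id:
  assumes "M > 1"
  shows "phiA M b = (\<lambda>x\<in>{0..<int M}. x) \<longleftrightarrow> [b = 1] (mod int M)"
proof
  assume h: "phiA M b = (\<lambda>x\<in>{0..<int M}. x)"
  have "phiA M b 1 = 1" using assms by (subst h) simp
  then have "b mod int M = 1" using assms by (simp add: phiA_app)
  then show "[b = 1] (mod int M)" using assms by (simp add: cong_def)
next
  assume h: "[b = 1] (mod int M)"
  show "phiA M b = (\<lambda>x\<in>{0..<int M}. x)"
  proof
    fix x show "phiA M b x = (\<lambda>x\<in>{0..<int M}. x) x"
    proof (cases "x \<in> {0..<int M}")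
      case True
      have "[b * x = 1 * x] (mod int M)" using h by (intro cong_mult) auto
      then have "b * x mod int M = x mod int M" by (simp add: cong_def)
      then show ?thesis using True by (simp add: phiA_app)
    next
      case False then show ?thesis by (auto simp: phiA_def CycN_def)
    qed
  qed
qed

lemma phiA_one: "M > 0 \<Longrightarrow> phiA M 1 = (\<lambda>x\<in>{0..<int M}. x)"
  by (rule ext) (simp add: phiA_def CycN_def)

lemma phiA_Bij:
  assumes "M > 0" "coprime b (int M)"
  shows "phiA M b \<in> Bij {0..<int M}"
proof -
  have ext: "phiA M b \<in> extensional {0..<int M}" by (simp add: phiA_def CycN_def)
  have inj: "inj_on (phiA M b) {0..<int M}"
  proof (rule inj_onI)
    fix x y assume x: "x \<in> {0..<int M}" and y: "y \<in> {0..<int M}" and e: "phiA M b x = phiA M b y"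
    then have "[b * x = b * y] (mod int M)" by (simp add: phiA_app cong_def)
    then have "[x = y] (mod int M)" using assms(2) cong_mult_lcancel by blast
    then show "x = y" using x y cong_less_imp_eq_int by auto
  qed
  have sub: "phiA M b ` {0..<int M} \<subseteq> {0..<int M}" using assms(1) by (auto simp: phiA_app)
  have "phiA M b ` {0..<int M} = {0..<int M}"
    using endo_inj_surj[OF _ sub inj] by simp
  then have "bij_betw (phiA M b) {0..<int M} {0..<int M}" using inj by (simp add: bij_betw_def)
  then show ?thesis using ext by (simp add: Bij_def)
qed

lemma phiA_hom: "M > 0 \<Longrightarrow> phiA M b \<in> hom (CycN M) (CycN M)"
  by (rule homI) (auto simp: CycN_def phiA_app mod_mult_right_eq mod_add_eq distrib_left)

lemma Hol_mult: "(x, f) \<otimes>\<^bsub>Hol N\<^esub> (y, g) = (x \<otimes>\<^bsub>N\<^esub> f y, compose (carrier N) f g)"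
  by (simp add: Hol_def)

lemma Hol_pow:
  assumes "M > 0" "s \<in> {0..<int M}"
  shows "(s, phiA M a) [^]\<^bsub>Hol (CycN M)\<^esub> (n::nat) = (s * geomS a n mod int M, phiA M (a ^ n))"
proof (induction n)
  case 0 then show ?case using assms by (simp add: Hol_def CycN_carrier CycN_one phiA_one id_def restrict_def)
next
  case (Suc n)
  have "(s, phiA M a) [^]\<^bsub>Hol (CycN M)\<^esub> Suc n
      = (s * geomS a n mod int M, phiA M (a ^ n)) \<otimes>\<^bsub>Hol (CycN M)\<^esub> (s, phiA M a)"
    using Suc by simp
  also have "\<dots> = ((s * geomS a n mod int M + a ^ n * s mod int M) mod int M,
       compose {0..<int M} (phiA M (a ^ n)) (phiA M a))"
    using assms by (simp only: Hol_mult CycN_mult CycN_carrier phiA_app)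
  also have "\<dots> = ((s * geomS a n + a ^ n * s) mod int M, phiA M (a ^ n * a))"
    by (simp only: phiA_compose mod_add_eq)
  also have "s * geomS a n + a ^ n * s = s * geomS a (Suc n)"
    by (simp add: geomS_Suc distrib_left mult.commute)
  also have "a ^ n * a = a ^ Suc n" by (simp add: power_Suc2)
  finally show ?case .
qed

lemma Hol_pow_one:
  assumes "M > 1" "s \<in> {0..<int M}"
  shows "(s, phiA M a) [^]\<^bsub>Hol (CycN M)\<^esub> (n::nat) = \<one>\<^bsub>Hol (CycN M)\<^esub>
     \<longleftrightarrow> int M dvd s * geomS a n \<and> [a ^ n = 1] (mod int M)"
proof -
  have "\<one>\<^bsub>Hol (CycN M)\<^esub> = (0, (\<lambda>x\<in>{0..<int M}. x))" by (simp add: Hol_def CycN_def id_def)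
  moreover have "(s, phiA M a) [^]\<^bsub>Hol (CycN M)\<^esub> n = (s * geomS a n mod int M, phiA M (a ^ n))"
    using assms by (intro Hol_pow) auto
  ultimately have "(s, phiA M a) [^]\<^bsub>Hol (CycN M)\<^esub> n = \<one>\<^bsub>Hol (CycN M)\<^esub> \<longleftrightarrow>
     s * geomS a n mod int M = 0 \<and> phiA M (a ^ n) = (\<lambda>x\<in>{0..<int M}. x)"
    by (simp only: prod.inject)
  also have "\<dots> \<longleftrightarrow> int M dvd s * geomS a n \<and> [a ^ n = 1] (mod int M)"
    using phiA_eq_id[OF assms(1), of "a ^ n"] by (simp only: dvd_eq_mod_eq_0)
  finally show ?thesis .
qed

lemma Aut_one: "\<one>\<^bsub>AutoGroup N\<^esub> = (\<lambda>x\<in>carrier N. x)"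
  by (simp add: AutoGroup_def BijGroup_def)

lemma Aut_carrier: "carrier (AutoGroup N) = auto N"
  by (simp add: AutoGroup_def BijGroup_def)

lemma Aut_mult: "f \<in> Bij (carrier N) \<Longrightarrow> g \<in> Bij (carrier N) \<Longrightarrow>
    f \<otimes>\<^bsub>AutoGroup N\<^esub> g = compose (carrier N) f g"
  by (simp add: AutoGroup_def BijGroup_def)

lemma Aut_pow:
  assumes "M > 0" "coprime a (int M)"
  shows "phiA M a [^]\<^bsub>AutoGroup (CycN M)\<^esub> (n::nat) = phiA M (a ^ n)"
proof (induction n)
  case 0
  have "phiA M a [^]\<^bsub>AutoGroup (CycN M)\<^esub> (0::nat) = (\<lambda>x\<in>{0..<int M}. x)"
    by (simp only: nat_pow_0 Aut_one CycN_carrier)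
  also have "\<dots> = phiA M (a ^ 0)" using phiA_one[OF assms(1)] by simp
  finally show ?case .
next
  case (Suc n)
  have b1: "phiA M (a ^ n) \<in> Bij (carrier (CycN M))" unfolding CycN_carrier using assms by (intro phiA_Bij) auto
  have b2: "phiA M a \<in> Bij (carrier (CycN M))" unfolding CycN_carrier using assms by (intro phiA_Bij) auto
  have "phiA M a [^]\<^bsub>AutoGroup (CycN M)\<^esub> Suc n = phiA M (a ^ n) \<otimes>\<^bsub>AutoGroup (CycN M)\<^esub> phiA M a"
    by (simp only: nat_pow_Suc Suc.IH)
  also have "\<dots> = compose {0..<int M} (phiA M (a ^ n)) (phiA M a)"
    using Aut_mult[OF b1 b2] by (simp only: CycN_carrier)
  also have "\<dots> = phiA M (a ^ Suc n)" by (simp only: phiA_compose power_Suc2)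
  finally show ?case .
qed

lemma phiA_auto:
  assumes "M > 0" "coprime a (int M)"
  shows "phiA M a \<in> carrier (AutoGroup (CycN M))"
  using phiA_Bij[OF assms] phiA_hom[OF assms(1)]
  unfolding Aut_carrier auto_def CycN_carrier by blast

lemma Aut_ord:
  assumes "M > 1" "coprime a (int M)"
  shows "[a ^ n = 1] (mod int M) \<longleftrightarrow> group.ord (AutoGroup (CycN M)) (phiA M a) dvd n"
proof -
  have M0: "M > 0" using assms by simp
  have g: "group (AutoGroup (CycN M))" by (rule group.AutoGroup[OF CycN_group[OF M0]])
  have "group.ord (AutoGroup (CycN M)) (phiA M a) dvd n \<longleftrightarrow>
     phiA M a [^]\<^bsub>AutoGroup (CycN M)\<^esub> n = \<one>\<^bsub>AutoGroup (CycN M)\<^esub>"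
    using group.pow_eq_id[OF g phiA_auto[OF M0 assms(2)]] by simp
  also have "\<dots> \<longleftrightarrow> phiA M (a ^ n) = (\<lambda>x\<in>{0..<int M}. x)"
    by (simp only: Aut_pow[OF M0 assms(2)] Aut_one CycN_carrier)
  also have "\<dots> \<longleftrightarrow> [a ^ n = 1] (mod int M)" by (rule phiA_eq_id[OF assms(1)])
  finally show ?thesis by simp
qed

lemma o2: assumes "\<forall>n. (a::nat) dvd n \<longleftrightarrow> D dvd n" shows "a = D"
proof -
  have "a dvd D" using assms[rule_format, of D] by simp
  moreover have "D dvd a" using assms[rule_format, of a] by simp
  ultimately show ?thesis by (rule dvd_antisym)
qed

lemma ord_charact:
  assumes G: "group G" and "\<And>n::nat. x [^]\<^bsub>G\<^esub> n = \<one>\<^bsub>G\<^esub> \<longleftrightarrow> D dvd n"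
  shows "group.ord G x = D"
proof -
  have "\<exists>d. \<forall>n::nat. x [^]\<^bsub>G\<^esub> n = \<one>\<^bsub>G\<^esub> \<longleftrightarrow> d dvd n" using assms by blast
  then have "\<forall>n::nat. x [^]\<^bsub>G\<^esub> n = \<one>\<^bsub>G\<^esub> \<longleftrightarrow> (SOME d. \<forall>n::nat. x [^]\<^bsub>G\<^esub> n = \<one>\<^bsub>G\<^esub> \<longleftrightarrow> d dvd n) dvd n"
    by (rule someI_ex)
  then have "\<forall>n::nat. x [^]\<^bsub>G\<^esub> n = \<one>\<^bsub>G\<^esub> \<longleftrightarrow> group.ord G x dvd n"
    by (subst group.ord_def[OF G])
  then have "\<forall>n. group.ord G x dvd n \<longleftrightarrow> D dvd n" using assms by simp
  then show ?thesis by (rule o2)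
qed



lemma powcong:
  assumes "Factorial_Ring.prime p" "[a = 1] (mod int p)"
  shows "(int p)^(k+1) dvd a^(p^k) - 1"
proof (induction k)
  case 0 then show ?case using assms(2) by (simp add: cong_iff_dvd_diff)
next
  case (Suc k)
  define b where "b = a^(p^k)"
  have bc: "[b = 1] (mod int p)" unfolding b_def using cong_pow[OF assms(2)] by (metis power_one)
  have "[geomS b p = int p] (mod int p)" using geomS_cong[OF bc] .
  then have d1: "int p dvd geomS b p" using cong_dvd_iff by (metis dvd_refl)
  have "a^(p^Suc k) = b^p" unfolding b_def by (simp only: power_Suc2 power_mult)
  then have e: "a^(p^Suc k) - 1 = (b - 1) * geomS b p" by (simp add: geomS_times)
  have "(int p)^(k+1) * int p dvd (b - 1) * geomS b p"
    using Suc d1 unfolding b_def by (rule mult_dvd_mono)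
  then show ?case using e by (simp add: mult.commute)
qed

lemma int_pow_dvd: "(int p)^j dvd int n \<longleftrightarrow> p^j dvd n"
  by (metis of_nat_dvd_iff of_nat_power)

lemma gen:
  assumes "Factorial_Ring.prime p" "Hyp p a"
  shows "(int p)^e dvd u * geomS a n \<longleftrightarrow> p^(the_enat(enat e - vp p u)) dvd n"
proof (cases "u = 0")
  case True then show ?thesis by (simp add: vp_def zero_enat_def)
next
  case False
  have "(int p)^e dvd u * geomS a n \<longleftrightarrow> (int p)^(e - Factorial_Ring.multiplicity (int p) u) dvd geomS a n"
    by (rule Vlem[OF assms(1) False])
  also have "\<dots> \<longleftrightarrow> (int p)^(e - Factorial_Ring.multiplicity (int p) u) dvd int n"
    by (rule geomS_dvd_iff[OF assms])
  also have "\<dots> \<longleftrightarrow> p^(e - Factorial_Ring.multiplicity (int p) u) dvd n" by (rule int_pow_dvd)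
  finally show ?thesis using False by (simp add: vp_def)
qed

lemma gen3:
  assumes "[a = 3] (mod 4)"
  shows "(2::int)^e dvd u * geomS a (2*m) \<longleftrightarrow>
     2^(the_enat(enat e - vp 2 u - vp 2 ((a + 1) div 2))) dvd 2*m"
proof -
  have p2: "Factorial_Ring.prime (2::nat)" by simp
  have "[a^2 = 3^2] (mod 4)" using cong_pow[OF assms] .
  moreover have "[(3::int)^2 = 1] (mod 4)" by (simp add: cong_def)
  ultimately have a2: "[a^2 = 1] (mod 4)" by (rule cong_trans)
  have H: "Hyp 2 (a^2)" using a2 by (simp add: Hyp_def)
  have "4 dvd a - 3" using assms by (simp add: cong_iff_dvd_diff)
  then obtain t where t: "a - 3 = 4 * t" by blast
  define c where "c = (a + 1) div 2"
  have a1: "a + 1 = 2 * (2 * t + 2)" using t by presburger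
  have ac: "a + 1 = 2 * c" unfolding c_def a1 by simp
  have gs: "geomS a (2*m) = 2 * c * geomS (a^2) m"
    using geomS_mult[of a 2 m] ac by (simp add: geomS_def numeral_2_eq_2 add.commute)
  show ?thesis
  proof (cases "u = 0 \<or> c = 0")
    case True
    have E: "enat e - vp 2 u - vp 2 c = 0"
    proof (cases "u = 0")
      case True then show ?thesis by (simp add: vp_def)
    next
      case False then have "c = 0" using \<open>u = 0 \<or> c = 0\<close> by simp
      then have "vp 2 c = \<infinity>" by (simp add: vp_def)
      then show ?thesis by (cases "vp 2 u") simp_all
    qed
    have z: "u * geomS a (2*m) = 0" using True gs by auto
    show ?thesis unfolding c_def[symmetric] z E by (simp add: zero_enat_def)
  next
    case False
    define v1 where "v1 = Factorial_Ring.multiplicity (2::int) u"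
    define v2 where "v2 = Factorial_Ring.multiplicity (2::int) c"
    have w0: "u * (2 * c) \<noteq> 0" using False by simp
    have mw: "Factorial_Ring.multiplicity (2::int) (u * (2 * c)) = v1 + Suc v2"
      using False unfolding v1_def v2_def
      by (simp add: prime_elem_multiplicity_mult_distrib multiplicity_times_same)
    have "(2::int)^e dvd u * geomS a (2*m) \<longleftrightarrow> (int 2)^e dvd (u * (2 * c)) * geomS (a^2) m"
      using gs by (simp add: mult.assoc)
    also have "\<dots> \<longleftrightarrow> (int 2)^(e - (v1 + Suc v2)) dvd geomS (a^2) m"
      using Vlem[OF p2, of "u * (2 * c)" e "geomS (a^2) m"] w0 mw by simp
    also have "\<dots> \<longleftrightarrow> (int 2)^(e - (v1 + Suc v2)) dvd int m"
      by (rule geomS_dvd_iff[OF p2 H])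
    also have "\<dots> \<longleftrightarrow> 2^(e - (v1 + Suc v2)) dvd m" by (rule int_pow_dvd)
    also have "\<dots> \<longleftrightarrow> 2^(e - v1 - v2) dvd 2 * m"
    proof (cases "e - v1 - v2")
      case 0 then show ?thesis by simp
    next
      case (Suc t)
      then have "e - (v1 + Suc v2) = t" by simp
      then show ?thesis using Suc by simp
    qed
    also have "e - v1 - v2 = the_enat(enat e - vp 2 u - vp 2 ((a + 1) div 2))"
      using False unfolding v1_def v2_def c_def by (simp add: vp_def)
    finally show ?thesis .
  qed
qed

lemma comb:
  assumes "Factorial_Ring.prime (p::nat)" "A = p^i"
    and "\<And>n. P n \<longleftrightarrow> Q n \<and> A dvd n"
    and "\<And>n. A dvd n \<Longrightarrow> (Q n \<longleftrightarrow> p^k dvd n)"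
  shows "P n \<longleftrightarrow> max (p^k) A dvd n"
proof (cases "k \<le> i")
  case True
  have "1 \<le> p" using prime_gt_1_nat[OF assms(1)] by simp
  then have "p^k \<le> p^i" by (rule power_increasing[OF True])
  then have "max (p^k) A = A" using assms(2) by simp
  moreover have "p^k dvd A" using True assms(2) by (simp add: le_imp_power_dvd)
  ultimately show ?thesis using assms(3,4) by (metis dvd_trans)
next
  case False
  have "1 \<le> p" using prime_gt_1_nat[OF assms(1)] by simp
  then have "p^i \<le> p^k" using False by (intro power_increasing) auto
  then have "max (p^k) A = p^k" using assms(2) by simp
  moreover have "A dvd p^k" using False assms(2) by (simp add: le_imp_power_dvd)
  ultimately show ?thesis using assms(3,4) by (metis dvd_trans)
qed

lemma modmul: "(m::int) dvd (u mod m) * Y \<longleftrightarrow> m dvd u * Y"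
  by (simp add: dvd_eq_mod_eq_0 mod_mult_left_eq)

theorem lemma3p2:
  fixes p e :: nat and a u :: int
  defines "N \<equiv> CycN (p ^ e)"
  defines "\<sigma> \<equiv> (1::int)"
  assumes "Factorial_Ring.prime p" and "e \<ge> 2" and "[a = 1] (mod int p)"
  shows "(odd p \<longrightarrow>
           group.ord (Hol N) (\<sigma> [^]\<^bsub>N\<^esub> u, phiA (p ^ e) a)
             = max (p ^ the_enat (enat e - vp p u)) (group.ord (AutoGroup N) (phiA (p ^ e) a)))
       \<and> (p = 2 \<longrightarrow> [a = 1] (mod 4) \<longrightarrow>
           group.ord (Hol N) (\<sigma> [^]\<^bsub>N\<^esub> u, phiA (p ^ e) a)
             = max (2 ^ the_enat (enat e - vp 2 u)) (group.ord (AutoGroup N) (phiA (p ^ e) a)))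
       \<and> (p = 2 \<longrightarrow> [a = 3] (mod 4) \<longrightarrow>
           group.ord (Hol N) (\<sigma> [^]\<^bsub>N\<^esub> u, phiA (p ^ e) a)
             = max (2 ^ the_enat (enat e - vp 2 u - vp 2 ((a + 1) div 2)))
                   (group.ord (AutoGroup N) (phiA (p ^ e) a)))"
proof -
  note pr = \<open>Factorial_Ring.prime p\<close>
  note ac = \<open>[a = 1] (mod int p)\<close>
  have p1: "p > 1" using prime_gt_1_nat[OF pr] .
  have e1: "e \<noteq> 0" using \<open>e \<ge> 2\<close> by simp
  have M1: "p ^ e > 1" using p1 e1 by (intro one_less_power) auto
  have M0: "p ^ e > 0" using p1 by simp
  have Ngrp: "group N" unfolding N_def by (rule CycN_group[OF M0])
  have s: "\<sigma> [^]\<^bsub>N\<^esub> u = u mod int (p ^ e)" unfolding N_def \<sigma>_def by (rule CycN_pow_int[OF M0])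
  have sc: "u mod int (p ^ e) \<in> {0..<int (p ^ e)}" using M0 by simp
  have ndv: "\<not> int p dvd a"
  proof
    assume "int p dvd a"
    moreover have "int p dvd a - 1" using ac by (simp add: cong_iff_dvd_diff)
    ultimately have "int p dvd a - (a - 1)" by (rule dvd_diff)
    then have "int p dvd 1" by simp
    then show False using p1 by simp
  qed
  have "Factorial_Ring.prime (int p)" using pr by (rule prime_nat_int_transfer[THEN iffD2])
  then have "coprime (int p) a" using ndv by (rule prime_imp_coprime)
  then have cop: "coprime a (int (p ^ e))" by (simp add: coprime_commute)
  define A where "A = group.ord (AutoGroup N) (phiA (p ^ e) a)"
  have AP: "[a ^ n = 1] (mod int (p ^ e)) \<longleftrightarrow> A dvd n" for n
    unfolding A_def N_def by (rule Aut_ord[OF M1 cop])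
  have "(int p)^(e+1) dvd a^(p^e) - 1" by (rule powcong[OF pr ac])
  moreover have "(int p)^e dvd (int p)^(e+1)" by (simp add: le_imp_power_dvd)
  ultimately have "(int p)^e dvd a^(p^e) - 1" by (rule dvd_trans[rotated])
  then have "[a ^ (p ^ e) = 1] (mod int (p ^ e))" by (simp add: cong_iff_dvd_diff)
  then have "A dvd p ^ e" using AP by blast
  then obtain i where Ai: "A = p ^ i" using divides_primepow_nat[OF pr] by blast
  define x where "x = (\<sigma> [^]\<^bsub>N\<^esub> u, phiA (p ^ e) a)"
  have Hx: "x [^]\<^bsub>Hol N\<^esub> n = \<one>\<^bsub>Hol N\<^esub> \<longleftrightarrow> int (p ^ e) dvd u * geomS a n \<and> A dvd n" for n
  proof -
    have "x [^]\<^bsub>Hol N\<^esub> n = \<one>\<^bsub>Hol N\<^esub> \<longleftrightarrow>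
        int (p ^ e) dvd (u mod int (p ^ e)) * geomS a n \<and> [a ^ n = 1] (mod int (p ^ e))"
      unfolding x_def s unfolding N_def by (rule Hol_pow_one[OF M1 sc])
    then show ?thesis by (simp only: modmul AP)
  qed
  have key: "group.ord (Hol N) x = max (p ^ k) A"
    if H: "\<And>n. A dvd n \<Longrightarrow> (int (p ^ e) dvd u * geomS a n \<longleftrightarrow> p ^ k dvd n)" for k
  proof (rule ord_charact[OF Hol_group[OF Ngrp]])
    fix n :: nat
    show "x [^]\<^bsub>Hol N\<^esub> n = \<one>\<^bsub>Hol N\<^esub> \<longleftrightarrow> max (p ^ k) A dvd n"
      by (rule comb[OF pr Ai Hx H])
  qed
  have c1: "group.ord (Hol N) x = max (p ^ the_enat (enat e - vp p u)) A" if "odd p"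
  proof (rule key)
    have "Hyp p a" using that ac by (simp add: Hyp_def)
    then show "int (p ^ e) dvd u * geomS a n \<longleftrightarrow> p ^ the_enat (enat e - vp p u) dvd n" for n
      using gen[OF pr, of a e u n] by simp
  qed
  have c2: "group.ord (Hol N) x = max (2 ^ the_enat (enat e - vp 2 u)) A"
    if "p = 2" "[a = 1] (mod 4)"
  proof -
    have "Hyp p a" using that by (simp add: Hyp_def)
    then have "int (p ^ e) dvd u * geomS a n \<longleftrightarrow> p ^ the_enat (enat e - vp p u) dvd n" for n
      using gen[OF pr, of a e u n] by simp
    then have "group.ord (Hol N) x = max (p ^ the_enat (enat e - vp p u)) A" by (rule key)
    then show ?thesis using that by simp
  qed
  have c3: "group.ord (Hol N) x = max (2 ^ the_enat (enat e - vp 2 u - vp 2 ((a + 1) div 2))) A"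
    if p2: "p = 2" and a3: "[a = 3] (mod 4)"
  proof -
    have "int (p ^ e) dvd u * geomS a n \<longleftrightarrow> p ^ the_enat (enat e - vp 2 u - vp 2 ((a + 1) div 2)) dvd n"
      if An: "A dvd n" for n
    proof -
      have cn: "[a ^ n = 1] (mod int (p ^ e))" using AP An by blast
      have "(4::int) dvd int (p ^ e)"
      proof -
        have "(2::int)^2 dvd 2^e" using \<open>e \<ge> 2\<close> by (rule le_imp_power_dvd)
        then show ?thesis using p2 by simp
      qed
      then have c4: "[a ^ n = 1] (mod 4)" using cn cong_dvd_modulus by blast
      have "even n"
      proof (rule ccontr)
        assume "odd n"
        then obtain m where m: "n = 2 * m + 1" using oddE by blast
        have "[a^2 = 3^2] (mod 4)" using cong_pow[OF a3] .
        moreover have "[(3::int)^2 = 1] (mod 4)" by (simp add: cong_def)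
        ultimately have "[a^2 = 1] (mod 4)" by (rule cong_trans)
        then have "[(a^2)^m = 1] (mod 4)" using cong_pow[of "a^2" 1 4 m] by simp
        then have "[a * (a^2)^m = 3 * 1] (mod 4)" using a3 by (intro cong_mult)
        moreover have "a ^ n = a * (a^2)^m" using m by (simp add: power_mult)
        ultimately have a3n: "[a ^ n = 3] (mod 4)" by simp
        have "[(3::int) = 1] (mod 4)" by (rule cong_trans[OF cong_sym[OF a3n] c4])
        then show False by (simp add: cong_def)
      qed
      then obtain m where m: "n = 2 * m" by blast
      show ?thesis using gen3[OF a3, of e u m] m p2 by simp
    qed
    then have "group.ord (Hol N) x = max (p ^ the_enat (enat e - vp 2 u - vp 2 ((a + 1) div 2))) A"
      by (rule key)
    then show ?thesis using p2 by simp
  qed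
  show ?thesis
    unfolding x_def[symmetric] A_def[symmetric] using c1 c2 c3 by blast
qed


end
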